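(* Let $N\ge1$, $\eta_S,\eta_{FS}\in\mathbb{R}$ and $q\in(0,1)$. For $\eta_F\in\mathbb{R}$, let $(X_1,\dots,X_N)\in\{0,1\}^N$ have distribution $$\Pr(X_1=x_1,\dots,X_N=x_N)=\frac{1}{Z_1}\Big(e^{\eta_F\sum_ix_i}+e^{\eta_S+(\eta_{FS}+\eta_F)\sum_ix_i}\Big),\qquad Z_1=(1+e^{\eta_F})^N+e^{\eta_S}(1+e^{\eta_F+\eta_{FS}})^N.$$ Define $g(y)=\big(1-\frac{1-q}{q}y\big)(1+y)^{N-1}$. Then a value $\eta_F^*\in\mathbb{R}$ gives $\Pr(X_1=1)=q$ if and only if $$g\big(e^{\eta_F^*}\big)+e^{\eta_S}\,g\big(e^{\eta_{FS}}e^{\eta_F^*}\big)=0.$$ *)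

theory Defs
  imports "HOL-Analysis.Analysis"
begin

text \<open>Configurations (x_1,...,x_N) in {0,1}^N, indexed 0..N-1 (index 0 is X_1),
  represented as extensional functions on {..<N}.\<close>
definition configs :: "nat \<Rightarrow> (nat \<Rightarrow> nat) set" where
  "configs N = PiE {..<N} (\<lambda>_. {0, 1})"

definition weight :: "nat \<Rightarrow> real \<Rightarrow> real \<Rightarrow> real \<Rightarrow> (nat \<Rightarrow> nat) \<Rightarrow> real" where
  "weight N eta_S eta_FS eta_F x =
     exp (eta_F * real (\<Sum>i<N. x i)) + exp (eta_S + (eta_FS + eta_F) * real (\<Sum>i<N. x i))"

definition Z1 :: "nat \<Rightarrow> real \<Rightarrow> real \<Rightarrow> real \<Rightarrow> real" where
  "Z1 N eta_S eta_FS eta_F =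
     (1 + exp eta_F) ^ N + exp eta_S * (1 + exp (eta_F + eta_FS)) ^ N"

definition prob_config :: "nat \<Rightarrow> real \<Rightarrow> real \<Rightarrow> real \<Rightarrow> (nat \<Rightarrow> nat) \<Rightarrow> real" where
  "prob_config N eta_S eta_FS eta_F x = weight N eta_S eta_FS eta_F x / Z1 N eta_S eta_FS eta_F"

definition prob_X1 :: "nat \<Rightarrow> real \<Rightarrow> real \<Rightarrow> real \<Rightarrow> real" where
  "prob_X1 N eta_S eta_FS eta_F =
     (\<Sum>x\<in>{x \<in> configs N. x 0 = 1}. prob_config N eta_S eta_FS eta_F x)"

definition g :: "nat \<Rightarrow> real \<Rightarrow> real \<Rightarrow> real" where
  "g N q y = (1 - (1 - q) / q * y) * (1 + y) ^ (N - 1)"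

end

theory Submission
  imports Defs
begin

lemma key:
  fixes c :: real
  assumes "N \<ge> 1"
  shows "(\<Sum>x\<in>{x \<in> configs N. x 0 = 1}. exp (c * real (\<Sum>i<N. x i))) = exp c * (1 + exp c) ^ (N - 1)"
proof -
  define f :: "nat \<Rightarrow> nat \<Rightarrow> real" where "f = (\<lambda>i (v::nat). if i = 0 \<and> v \<noteq> 1 then 0 else exp c ^ v)"
  have e: "exp (c * real (\<Sum>i<N. x i)) = (\<Prod>i<N. exp c ^ x i)" for x :: "nat \<Rightarrow> nat"
    by (simp add: exp_of_nat_mult[symmetric] sum_distrib_left exp_sum mult.commute)
  have fin: "finite (configs N)" unfolding configs_def by (intro finite_PiE) auto
  have "(\<Sum>x\<in>{x \<in> configs N. x 0 = 1}. exp (c * real (\<Sum>i<N. x i)))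
      = (\<Sum>x\<in>configs N. \<Prod>i<N. f i (x i))"
  proof -
    have "(\<Sum>x\<in>configs N. \<Prod>i<N. f i (x i)) = (\<Sum>x\<in>{x \<in> configs N. x 0 = 1}. \<Prod>i<N. f i (x i))"
    proof (rule sum.mono_neutral_right[OF fin])
      show "{x \<in> configs N. x 0 = 1} \<subseteq> configs N" by auto
      show "\<forall>x\<in>configs N - {x \<in> configs N. x 0 = 1}. (\<Prod>i<N. f i (x i)) = 0"
      proof
        fix x assume "x \<in> configs N - {x \<in> configs N. x 0 = 1}"
        hence "x 0 \<noteq> 1" by auto
        moreover have "0 \<in> {..<N}" using assms by auto
        ultimately show "(\<Prod>i<N. f i (x i)) = 0"
          by (intro prod_zero) (auto simp: f_def intro!: bexI[of _ 0])
      qed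
    qed
    also have "\<dots> = (\<Sum>x\<in>{x \<in> configs N. x 0 = 1}. exp (c * real (\<Sum>i<N. x i)))"
      apply (intro sum.cong refl)
      apply (subst e)
      apply (rule prod.cong)
       apply (auto simp: f_def)
      by (metis gr0I)
    finally show ?thesis by simp
  qed
  also have "\<dots> = (\<Prod>i<N. \<Sum>v\<in>{0,1}. f i v)"
    unfolding configs_def by (rule prod_sum_PiE[symmetric]) auto
  also have "\<dots> = exp c * (1 + exp c) ^ (N - 1)"
  proof -
    obtain M where M: "N = Suc M" using assms by (cases N) auto
    show ?thesis unfolding M by (subst prod.lessThan_Suc_shift) (simp add: f_def)
  qed
  finally show ?thesis .
qed

lemma total:
  fixes c :: real
  shows "(\<Sum>x\<in>configs N. exp (c * real (\<Sum>i<N. x i))) = (1 + exp c) ^ N"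
proof -
  have e: "exp (c * real (\<Sum>i<N. x i)) = (\<Prod>i<N. exp c ^ x i)" for x :: "nat \<Rightarrow> nat"
    by (simp add: exp_of_nat_mult[symmetric] sum_distrib_left exp_sum mult.commute)
  have "(\<Sum>x\<in>configs N. exp (c * real (\<Sum>i<N. x i))) = (\<Sum>x\<in>configs N. \<Prod>i<N. exp c ^ x i)"
    by (rule sum.cong[OF refl e])
  also have "\<dots> = (\<Prod>i<N. \<Sum>v\<in>{0,1}. exp c ^ v)"
    unfolding configs_def by (rule prod_sum_PiE[symmetric]) auto
  finally show ?thesis by simp
qed

theorem proposition5:
  fixes N :: nat and eta_S eta_FS q eta_F_star :: real
  assumes "N \<ge> 1" and "0 < q" and "q < 1"
  shows "prob_X1 N eta_S eta_FS eta_F_star = q \<longleftrightarrow>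
         g N q (exp eta_F_star) + exp eta_S * g N q (exp eta_FS * exp eta_F_star) = 0"
proof -
  define y where "y = exp eta_F_star"
  define w where "w = exp eta_FS * exp eta_F_star"
  define s where "s = exp eta_S"
  have Zpos: "Z1 N eta_S eta_FS eta_F_star > 0"
    unfolding Z1_def by (intro add_pos_pos mult_pos_pos zero_less_power) (auto intro: add_pos_pos)
  have Z: "Z1 N eta_S eta_FS eta_F_star = (1 + y) ^ N + s * (1 + w) ^ N"
    unfolding Z1_def y_def w_def s_def by (simp add: exp_add mult.commute)
  have wexp: "exp (eta_FS + eta_F_star) = w" unfolding w_def by (simp add: exp_add)
  have num: "(\<Sum>x\<in>{x \<in> configs N. x 0 = 1}. weight N eta_S eta_FS eta_F_star x)
       = y * (1 + y) ^ (N - 1) + s * (w * (1 + w) ^ (N - 1))"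
  proof -
    have "(\<Sum>x\<in>{x \<in> configs N. x 0 = 1}. weight N eta_S eta_FS eta_F_star x)
      = (\<Sum>x\<in>{x \<in> configs N. x 0 = 1}. exp (eta_F_star * real (\<Sum>i<N. x i)))
        + s * (\<Sum>x\<in>{x \<in> configs N. x 0 = 1}. exp ((eta_FS + eta_F_star) * real (\<Sum>i<N. x i)))"
      unfolding weight_def sum.distrib s_def sum_distrib_left by (simp add: exp_add)
    also have "\<dots> = y * (1 + y) ^ (N - 1) + s * (w * (1 + w) ^ (N - 1))"
      unfolding key[OF assms(1)] y_def wexp ..
    finally show ?thesis .
  qed
  have P: "prob_X1 N eta_S eta_FS eta_F_star
      = (y * (1 + y) ^ (N - 1) + s * (w * (1 + w) ^ (N - 1))) / ((1 + y) ^ N + s * (1 + w) ^ N)"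
    unfolding prob_X1_def prob_config_def sum_divide_distrib[symmetric] num Z by simp
  have pN: "(1 + u) ^ N = (1 + u) * (1 + u) ^ (N - 1)" for u :: real
    using assms(1) by (metis Suc_diff_1 less_le_trans zero_less_one power_Suc)
  have G: "q * g N q u = q * (1 + u) ^ N - u * (1 + u) ^ (N - 1)" for u
    unfolding g_def pN using assms(2) by (simp add: field_simps)
  have Zp: "(1 + y) ^ N + s * (1 + w) ^ N > 0" using Zpos Z by simp
  have "prob_X1 N eta_S eta_FS eta_F_star = q \<longleftrightarrow>
        y * (1 + y) ^ (N - 1) + s * (w * (1 + w) ^ (N - 1)) = q * ((1 + y) ^ N + s * (1 + w) ^ N)"
    unfolding P using Zp by (simp add: divide_eq_eq)
  also have "\<dots> \<longleftrightarrow> q * (g N q y + s * g N q w) = 0"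
  proof -
    have "q * (g N q y + s * g N q w) = q * (1 + y) ^ N - y * (1 + y) ^ (N - 1)
           + s * (q * (1 + w) ^ N - w * (1 + w) ^ (N - 1))"
      using G[of y] G[of w] by (simp add: distrib_right distrib_left mult.assoc mult.left_commute)
    thus ?thesis by (simp add: algebra_simps) (smt (verit))
  qed
  also have "\<dots> \<longleftrightarrow> g N q y + s * g N q w = 0" using assms(2) by simp
  finally show ?thesis unfolding y_def w_def s_def .
qed

end
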